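(* Let $q$ be a power of $2$, $n\ge 4$, and let $M$ be an $n\times n$ matrix with entries in $\mathbb{F}_q$. Then $0\in\mathrm{Num}'_0(M)_q$.
   Context: For $M=(m_{ij})$ with entries in $\mathbb{F}_q$ and $u=(x_1,\dots,x_n)\in\mathbb{F}_q^n$, with the Hermitian form $\langle u,v\rangle=\sum_i u_i^qv_i$ one has $\langle u,u\rangle=\sum_i x_i^2$ and $\langle u,Mu\rangle=\sum_{i,j}m_{ij}x_ix_j$. $\mathrm{Num}'_0(M)_q=\{\langle u,Mu\rangle: u\in\mathbb{F}_q^n\setminus\{0\},\ \langle u,u\rangle=0\}$. *)

theory Defs
  imports "HOL-Analysis.Analysis"
begin

definition herm :: "'a::{finite,field}^'n \<Rightarrow> 'a^'n \<Rightarrow> 'a" where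
  "herm u v = (\<Sum>i\<in>UNIV. (u $ i) ^ CARD('a) * (v $ i))"

definition num0' :: "'a::{finite,field}^'n^'n \<Rightarrow> 'a set" where
  "num0' M = {herm u (M *v u) | u. u \<noteq> 0 \<and> herm u u = 0}"

end

theory Submission
  imports Defs
begin

lemma char2:
  assumes "\<exists>k. CARD('a::{finite,field}) = 2 ^ k"
  shows "(2::'a) = 0"
proof -
  obtain k where k: "CARD('a) = 2 ^ k" using assms by blast
  have inj: "inj (\<lambda>y::'a. y + 1)" by (rule injI) simp
  have im: "range (\<lambda>y::'a. y + 1) = UNIV"
    by (metis (no_types) diff_add_cancel rangeI surj_def)
  have "(\<Sum>y\<in>UNIV. (y::'a)) = (\<Sum>y\<in>range (\<lambda>y::'a. y + 1). y)" using im by simp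
  also have "\<dots> = (\<Sum>y\<in>UNIV. y + 1)" by (subst sum.reindex[OF inj]) simp
  also have "\<dots> = (\<Sum>y\<in>UNIV. (y::'a)) + of_nat CARD('a)" by (simp add: sum.distrib)
  finally have "of_nat CARD('a) = (0::'a)" by simp
  then have "(2::'a) ^ k = 0" using k by (metis of_nat_numeral of_nat_power)
  then show ?thesis by simp
qed

lemma fermat:
  fixes x :: "'a::{finite,field}"
  shows "x ^ CARD('a) = x"
proof (cases "x = 0")
  case True then show ?thesis by simp
next
  case False
  let ?S = "UNIV - {0::'a}"
  have inj: "inj_on (\<lambda>y. x * y) ?S" using False by (auto intro: inj_onI)
  have im: "(\<lambda>y. x * y) ` ?S = ?S"
  proof
    show "(\<lambda>y. x * y) ` ?S \<subseteq> ?S" using False by auto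
    show "?S \<subseteq> (\<lambda>y. x * y) ` ?S"
    proof
      fix z assume "z \<in> ?S"
      then have "z = x * (z / x)" "z / x \<in> ?S" using False by auto
      then show "z \<in> (\<lambda>y. x * y) ` ?S" by blast
    qed
  qed
  have "prod (\<lambda>y. y) ?S = prod (\<lambda>y. y) ((\<lambda>y. x * y) ` ?S)" using im by simp
  also have "\<dots> = prod (\<lambda>y. x * y) ?S" by (subst prod.reindex[OF inj]) simp
  also have "\<dots> = x ^ card ?S * prod (\<lambda>y. y) ?S" by (simp add: prod.distrib)
  finally have P: "prod (\<lambda>y. y) ?S = x ^ card ?S * prod (\<lambda>y. y) ?S" .
  have "prod (\<lambda>y. y) ?S \<noteq> 0" by simp
  with P have "x ^ card ?S = 1" by simp
  moreover have "card ?S + 1 = CARD('a)"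
    by (simp add: card_Diff_singleton)
  ultimately show ?thesis by (metis power_Suc2 mult_1 Suc_eq_plus1)
qed

definition G :: "'a::field^'n::finite^'n \<Rightarrow> 'a^'n \<Rightarrow> 'a^'n \<Rightarrow> 'a" where
  "G M u v = (\<Sum>i\<in>UNIV. u$i * (M *v v)$i)"

lemma G_add1: "G M (u + v) w = G M u w + G M v w"
  by (simp add: G_def algebra_simps sum.distrib)
lemma G_smult1: "G M (c *s u) w = c * G M u w"
  by (simp add: G_def algebra_simps sum_distrib_left)
lemma G_add2: "G M u (v + w) = G M u v + G M u w"
  by (simp add: G_def algebra_simps sum.distrib matrix_vector_right_distrib)
lemma G_smult2: "G M u (c *s w) = c * G M u w"
proof -
  have "M *v (c *s w) = c *s (M *v w)"
    by (simp add: matrix_vector_mult_def vec_eq_iff sum_distrib_left algebra_simps)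
  then show ?thesis by (simp add: G_def algebra_simps sum_distrib_left)
qed

lemma G_expand:
  "G M (x *s v + y *s w) (x *s v + y *s w) =
     x^2 * G M v v + x*y*(G M v w + G M w v) + y^2 * G M w w"
  by (simp add: G_add1 G_add2 G_smult1 G_smult2 power2_eq_square algebra_simps)

lemma B_lin:
  "G M v (c *s w + d *s z) + G M (c *s w + d *s z) v =
     c * (G M v w + G M w v) + d * (G M v z + G M z v)"
  by (simp add: G_add1 G_add2 G_smult1 G_smult2 algebra_simps)

lemma sq_sum:
  assumes "(2::'a::field) = 0" and "finite A"
  shows "(\<Sum>i\<in>A. f i)^2 = (\<Sum>i\<in>A. (f i :: 'a)^2)"
  using assms(2)
proof (induction A rule: finite_induct)
  case empty then show ?case by simp
next
  case (insert x F)
  have "(f x + sum f F)^2 = (f x)^2 + (sum f F)^2 + 2 * f x * sum f F"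
    by (simp add: power2_eq_square algebra_simps)
  then show ?case using insert assms(1) by simp
qed

lemma herm_self:
  fixes u :: "'a::{finite,field}^'n::finite"
  assumes "(2::'a) = 0"
  shows "herm u u = (\<Sum>i\<in>UNIV. u$i)^2"
  by (simp add: herm_def fermat sq_sum[OF assms] power2_eq_square[symmetric])

lemma herm_M:
  fixes u :: "'a::{finite,field}^'n::finite"
  shows "herm u (M *v u) = G M u u"
  by (simp add: herm_def fermat G_def)

lemma sqrt_ex:
  assumes "(2::'a::{finite,field}) = 0"
  shows "\<exists>s. z = (s::'a)^2"
proof -
  have "inj (\<lambda>s::'a. s^2)"
  proof (rule injI)
    fix x y :: 'a assume "x^2 = y^2"
    moreover have "(x + y)^2 = x^2 + y^2 + 2*x*y" by (simp add: power2_eq_square algebra_simps)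
    ultimately have "(x + y)^2 = 2 * y^2" using assms by (simp add: mult_2)
    then have "x + y = 0" using assms by simp
    then have "x = - y" by (simp add: eq_neg_iff_add_eq_0)
    moreover have "- y = y" using assms by (metis add_eq_0_iff mult_2 mult_zero_left)
    ultimately show "x = y" by simp
  qed
  then have "surj (\<lambda>s::'a. s^2)" using finite_UNIV_inj_surj[of "\<lambda>s::'a. s^2"] by simp
  then show ?thesis by (metis surjD)
qed

lemma four_distinct:
  assumes "CARD('n::finite) \<ge> 4"
  shows "\<exists>a b c d::'n. a \<noteq> b \<and> a \<noteq> c \<and> a \<noteq> d \<and> b \<noteq> c \<and> b \<noteq> d \<and> c \<noteq> d"
proof -
  obtain A :: "'n set" where "card A = 4" using assms by (meson obtain_subset_with_card_n)
  then show ?thesis by (auto simp: card_Suc_eq numeral_eq_Suc)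
qed

theorem corollary2:
  fixes M :: "'a::{finite,field}^'n::finite^'n"
  assumes "\<exists>k. CARD('a) = 2 ^ k"
    and "CARD('n) \<ge> 4"
  shows "0 \<in> num0' M"
proof -
  have two: "(2::'a) = 0" using char2[OF assms(1)] .
  have neg: "\<And>z::'a. z + z = 0" using two by (metis mult_2 mult_zero_left)
  have neg': "\<And>z::'a. 2 * z = 0" using two by simp
  obtain a b c d :: 'n where dist: "a \<noteq> b" "a \<noteq> c" "a \<noteq> d" "b \<noteq> c" "b \<noteq> d" "c \<noteq> d"
    using four_distinct[OF assms(2)] by blast
  define B where "B v w = G M v w + G M w v" for v w
  define S where "S (u::'a^'n) = (\<Sum>i\<in>UNIV. u$i)" for u
  define v1 where "v1 = axis a (1::'a) + axis b 1"
  define v2 where "v2 = axis a (1::'a) + axis c 1"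
  define v3 where "v3 = axis a (1::'a) + axis d 1"
  have Slin: "S (x *s v + y *s w) = x * S v + y * S w" for x y v w
    by (simp add: S_def sum.distrib sum_distrib_left)
  have Sax: "S (axis i 1 + axis j 1) = 0" for i j
    using two by (simp add: S_def sum.distrib axis_def)
  have S1: "S v1 = 0" "S v2 = 0" "S v3 = 0" using Sax by (auto simp: v1_def v2_def v3_def)
  obtain cc dd where cd: "cc \<noteq> 0 \<or> dd \<noteq> 0" and Bw: "B v1 (cc *s v2 + dd *s v3) = 0"
  proof (cases "B v1 v2 = 0 \<and> B v1 v3 = 0")
    case True
    then show ?thesis using that[of 1 0] B_lin[of M v1 1 v2 0 v3] by (simp add: B_def)
  next
    case False
    have "B v1 (B v1 v3 *s v2 + B v1 v2 *s v3) = B v1 v3 * B v1 v2 + B v1 v2 * B v1 v3"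
      using B_lin[of M v1 "B v1 v3" v2 "B v1 v2" v3] by (simp add: B_def)
    also have "\<dots> = 0" using neg by (metis mult.commute)
    finally show ?thesis using that[of "B v1 v3" "B v1 v2"] False by blast
  qed
  define w where "w = cc *s v2 + dd *s v3"
  have Sw: "S w = 0" using Slin[of cc v2 dd v3] S1 by (simp add: w_def)
  define A where "A = G M v1 v1"
  define C where "C = G M w w"
  obtain x y :: 'a where xy: "(x *s v1 + y *s w) \<noteq> 0" "G M (x *s v1 + y *s w) (x *s v1 + y *s w) = 0"
  proof (cases "A = 0 \<and> C = 0")
    case True
    have "(1 *s v1 + 0 *s w) $ b = 1" using dist by (simp add: v1_def axis_def)
    then have "(1 *s v1 + 0 *s w) \<noteq> 0" by auto
    moreover have "G M (1 *s v1 + 0 *s w) (1 *s v1 + 0 *s w) = 0"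
      using True by (simp add: A_def)
    ultimately show ?thesis using that by blast
  next
    case False
    obtain x where x: "C = x^2" using sqrt_ex[OF two] by blast
    obtain y where y: "A = y^2" using sqrt_ex[OF two] by blast
    let ?u = "x *s v1 + y *s w"
    have "G M ?u ?u = x^2 * A + x*y*B v1 w + y^2 * C"
      using G_expand[of M x v1 y w] by (simp add: A_def C_def B_def)
    also have "\<dots> = C * A + A * C" using Bw by (simp add: w_def x y)
    also have "\<dots> = 0" using neg by (metis mult.commute)
    finally have Q: "G M ?u ?u = 0" .
    have ub: "?u $ b = x" "?u $ c = y * cc" "?u $ d = y * dd"
      using dist by (auto simp: v1_def v2_def v3_def w_def axis_def)
    have "?u \<noteq> 0"
    proof
      assume "?u = 0"
      then have "x = 0" "y * cc = 0" "y * dd = 0" using ub by auto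
      then have "y = 0" using cd by auto
      with \<open>x = 0\<close> show False using False x y by simp
    qed
    then show ?thesis using that Q by blast
  qed
  let ?u = "x *s v1 + y *s w"
  have "herm ?u ?u = 0"
    using herm_self[OF two, of ?u] Slin[of x v1 y w] S1 Sw by (simp add: S_def)
  moreover have "herm ?u (M *v ?u) = 0" using herm_M xy(2) by metis
  ultimately show ?thesis unfolding num0'_def using xy(1) by force
qed

end
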